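(* Let $S,T$ be finite sets, $L:\{0,1\}^S\to\{0,1\}$ a monotone Boolean function, and $\psi:S\to T$ a function with $|\psi(A)|=|A|$ for every minimal one-set $A$ of $L$. Let $X=(X(i))_{i\in S}$ and $Y=(Y(j))_{j\in T}$ be i.i.d. Boolean collections with intensity $p\in[0,1]$. Assume moreover that there are $i_1,i_2\in S$ and $j_0\in T$ with $\psi^{-1}(\{j_0\})=\{i_1,i_2\}$ and $|\psi^{-1}(\{j\})|=1$ for all $j\neq j_0$. Then $$\mathbb P[L(X)=1]-\mathbb P[L(Y\circ\psi)=1]=p(1-p)\Big\{\mathbb P\big[L^X_{i_1,i_2}=f_\vee\big]-\mathbb P\big[L^X_{i_1,i_2}=f_\wedge\big]\Big\}.$$
   Context: - Monotone: $x\leq y$ pointwise implies $L(x)\leq L(y)$. - A one-set of $L$ is $A\subset S$ with $L(1_A)=1$; it is minimal if it contains no other one-set as a proper subset. - Intensity $p$ means $\mathbb P[\cdot=1]=p$; $(Y\circ\psi)(i)=Y(\psi(i))$. - For distinct $i_1,i_2\in S$ and $x\in\{0,1\}^S$, $L^x_{i_1,i_2}:\{0,1\}^2\to\{0,1\}$ is $L^x_{i_1,i_2}(z_1,z_2):=L(x')$, where $x'(i_k)=z_k$ for $k=1,2$ and $x'(i)=x(i)$ otherwise. - $f_\vee(z_1,z_2)=z_1\vee z_2$ and $f_\wedge(z_1,z_2)=z_1\wedge z_2$. *)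

theory Defs
  imports "HOL-Probability.Probability"
begin

text \<open>Boolean configurations on a set S: functions 'a => bool that are False outside S
  (we identify 0 with False and 1 with True).\<close>
definition bconf :: "'a set \<Rightarrow> ('a \<Rightarrow> bool) set" where
  "bconf S = {x. \<forall>i. i \<notin> S \<longrightarrow> \<not> x i}"

definition monotone_bf :: "'a set \<Rightarrow> (('a \<Rightarrow> bool) \<Rightarrow> bool) \<Rightarrow> bool" where
  "monotone_bf S L \<longleftrightarrow>
     (\<forall>x\<in>bconf S. \<forall>y\<in>bconf S. (\<forall>i\<in>S. x i \<longrightarrow> y i) \<longrightarrow> L x \<longrightarrow> L y)"

definition one_set :: "'a set \<Rightarrow> (('a \<Rightarrow> bool) \<Rightarrow> bool) \<Rightarrow> 'a set \<Rightarrow> bool" where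
  "one_set S L A \<longleftrightarrow> A \<subseteq> S \<and> L (\<lambda>i. i \<in> A)"

definition minimal_one_set :: "'a set \<Rightarrow> (('a \<Rightarrow> bool) \<Rightarrow> bool) \<Rightarrow> 'a set \<Rightarrow> bool" where
  "minimal_one_set S L A \<longleftrightarrow> one_set S L A \<and> (\<forall>B. B \<subset> A \<longrightarrow> \<not> one_set S L B)"

definition iid_bool :: "'a set \<Rightarrow> real \<Rightarrow> ('a \<Rightarrow> bool) pmf" where
  "iid_bool S p = Pi_pmf S False (\<lambda>_. bernoulli_pmf p)"

definition Lpair :: "(('a \<Rightarrow> bool) \<Rightarrow> bool) \<Rightarrow> 'a \<Rightarrow> 'a \<Rightarrow> ('a \<Rightarrow> bool) \<Rightarrow> bool \<Rightarrow> bool \<Rightarrow> bool" where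
  "Lpair L i1 i2 x = (\<lambda>z1 z2. L (x(i1 := z1, i2 := z2)))"

definition f_or :: "bool \<Rightarrow> bool \<Rightarrow> bool" where "f_or z1 z2 = (z1 \<or> z2)"
definition f_and :: "bool \<Rightarrow> bool \<Rightarrow> bool" where "f_and z1 z2 = (z1 \<and> z2)"

end

theory Submission
  imports Defs
begin

lemma prob_bind_pmf:
  "measure_pmf.prob (bind_pmf M f) A = (\<integral>x. measure_pmf.prob (f x) A \<partial>M)"
proof -
  have "ennreal (measure_pmf.prob (bind_pmf M f) A) = emeasure (bind_pmf M f) A"
    by (simp add: measure_pmf.emeasure_eq_measure)
  also have "\<dots> = (\<integral>\<^sup>+x. emeasure (f x) A \<partial>M)"
    by simp
  also have "\<dots> = (\<integral>\<^sup>+x. ennreal (measure_pmf.prob (f x) A) \<partial>M)"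
    by (simp add: measure_pmf.emeasure_eq_measure)
  also have "\<dots> = ennreal (\<integral>x. measure_pmf.prob (f x) A \<partial>M)"
    by (rule nn_integral_eq_integral)
       (auto intro!: measure_pmf.integrable_const_bound[where B=1])
  finally show ?thesis by (simp add: integral_nonneg_AE)
qed

lemma iid_S_decomp:
  assumes "finite S" "i1 \<in> S" "i2 \<in> S" "i1 \<noteq> i2"
  shows "iid_bool S p = bind_pmf (bernoulli_pmf p) (\<lambda>a. bind_pmf (bernoulli_pmf p)
     (\<lambda>b. map_pmf (\<lambda>x. x(i1 := a, i2 := b)) (iid_bool (S - {i1,i2}) p)))"
proof -
  let ?R = "S - {i1,i2}"
  have S: "S = insert i1 (insert i2 ?R)" using assms by auto
  have f: "finite ?R" using assms by auto
  have "iid_bool S p = Pi_pmf (insert i1 (insert i2 ?R)) False (\<lambda>_. bernoulli_pmf p)"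
    unfolding iid_bool_def using S by simp
  also have "\<dots> = bind_pmf (bernoulli_pmf p) (\<lambda>a. bind_pmf (Pi_pmf (insert i2 ?R) False (\<lambda>_. bernoulli_pmf p)) (\<lambda>f. return_pmf (f(i1 := a))))"
    by (rule Pi_pmf_insert') (use f assms in auto)
  also have "Pi_pmf (insert i2 ?R) False (\<lambda>_. bernoulli_pmf p) = bind_pmf (bernoulli_pmf p) (\<lambda>b. bind_pmf (Pi_pmf ?R False (\<lambda>_. bernoulli_pmf p)) (\<lambda>f. return_pmf (f(i2 := b))))"
    by (rule Pi_pmf_insert') (use f assms in auto)
  finally have e: "iid_bool S p = bind_pmf (bernoulli_pmf p) (\<lambda>a. bind_pmf (bind_pmf (bernoulli_pmf p) (\<lambda>b. bind_pmf (Pi_pmf ?R False (\<lambda>_. bernoulli_pmf p)) (\<lambda>f. return_pmf (f(i2 := b))))) (\<lambda>f. return_pmf (f(i1 := a))))" .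
  have tw: "\<And>f a b. (f(i2:=b))(i1:=a) = f(i1:=a, i2:=b)" using assms by (simp add: fun_upd_twist)
  show ?thesis
    unfolding e
    by (simp only: iid_bool_def bind_assoc_pmf bind_return_pmf map_pmf_def tw)
qed

lemma iid_T_decomp:
  assumes "finite S" "finite T" "\<psi> ` S \<subseteq> T" "i1 \<in> S" "i2 \<in> S" "i1 \<noteq> i2" "j0 \<in> T"
    and "{i \<in> S. \<psi> i = j0} = {i1, i2}"
    and "\<And>j. j \<in> T \<Longrightarrow> j \<noteq> j0 \<Longrightarrow> card {i \<in> S. \<psi> i = j} = 1"
  shows "map_pmf (\<lambda>Y i. if i \<in> S then Y (\<psi> i) else False) (iid_bool T p) =
     bind_pmf (bernoulli_pmf p) (\<lambda>c. map_pmf (\<lambda>x. x(i1 := c, i2 := c)) (iid_bool (S - {i1,i2}) p))"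
proof -
  let ?R = "S - {i1,i2}"
  let ?T = "T - {j0}"
  let ?B = "bernoulli_pmf p"
  define h where "h x = (if x \<in> ?R then \<psi> x else j0)" for x
  have fT: "finite ?T" using assms by auto
  have fR: "finite ?R" using assms by auto
  have psiR: "\<psi> i \<noteq> j0" if "i \<in> ?R" for i using that assms(8) by blast
  have bij: "bij_betw h ?R ?T"
  proof (rule bij_betw_imageI)
    show "inj_on h ?R"
    proof (rule inj_onI)
      fix a b assume ab: "a \<in> ?R" "b \<in> ?R" "h a = h b"
      hence e: "\<psi> a = \<psi> b" by (simp add: h_def)
      have j: "\<psi> a \<in> T" "\<psi> a \<noteq> j0" using ab assms(3) psiR by auto
      have c: "card {i \<in> S. \<psi> i = \<psi> a} = 1" using assms(9)[OF j] .
      then obtain k where "{i \<in> S. \<psi> i = \<psi> a} = {k}" using card_1_singletonE by blast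
      moreover have "a \<in> {i \<in> S. \<psi> i = \<psi> a}" "b \<in> {i \<in> S. \<psi> i = \<psi> a}" using ab e by auto
      ultimately show "a = b" by auto
    qed
    show "h ` ?R = ?T"
    proof
      show "h ` ?R \<subseteq> ?T" using assms(3) psiR by (auto simp: h_def)
      show "?T \<subseteq> h ` ?R"
      proof
        fix j assume j: "j \<in> ?T"
        have "card {i \<in> S. \<psi> i = j} = 1" using assms(9) j by auto
        then obtain k where k: "{i \<in> S. \<psi> i = j} = {k}" using card_1_singletonE by blast
        hence "k \<in> S" "\<psi> k = j" by auto
        moreover have "k \<notin> {i1,i2}" using assms(8) j \<open>\<psi> k = j\<close> by auto
        ultimately show "j \<in> h ` ?R" by (auto simp: h_def intro!: image_eqI[of _ _ k])
      qed
    qed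
  qed
  have PR: "Pi_pmf ?R False (\<lambda>_. ?B) = map_pmf (\<lambda>g. g \<circ> h) (Pi_pmf ?T False (\<lambda>_. ?B))"
    by (rule Pi_pmf_bij_betw[OF fR bij]) (auto simp: h_def)
  have PR2: "map_pmf (\<lambda>f i. if i \<in> ?R then f (\<psi> i) else False) (Pi_pmf ?T False (\<lambda>_. ?B))
       = Pi_pmf ?R False (\<lambda>_. ?B)"
    unfolding PR
  proof (rule map_pmf_cong[OF refl])
    fix g assume "g \<in> set_pmf (Pi_pmf ?T False (\<lambda>_. ?B))"
    hence "g j0 = False" using set_Pi_pmf_subset[OF fT, of False "\<lambda>_. ?B"] by auto
    thus "(\<lambda>i. if i \<in> ?R then g (\<psi> i) else False) = g \<circ> h"
      by (auto simp: h_def fun_eq_iff)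
  qed
  have TT: "T = insert j0 ?T" using assms by auto
  have "iid_bool T p = Pi_pmf (insert j0 ?T) False (\<lambda>_. ?B)"
    unfolding iid_bool_def using TT by simp
  also have "\<dots> = bind_pmf ?B (\<lambda>c. bind_pmf (Pi_pmf ?T False (\<lambda>_. ?B)) (\<lambda>f. return_pmf (f(j0 := c))))"
    by (rule Pi_pmf_insert') (use fT in auto)
  finally have eq: "iid_bool T p = bind_pmf ?B (\<lambda>c. bind_pmf (Pi_pmf ?T False (\<lambda>_. ?B)) (\<lambda>f. return_pmf (f(j0 := c))))" .
  have upd: "(\<lambda>i. if i \<in> S then (f(j0 := c)) (\<psi> i) else False) =
     (\<lambda>i. if i \<in> ?R then f (\<psi> i) else False)(i1 := c, i2 := c)" for f :: "'b \<Rightarrow> bool" and c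
  proof
    fix i show "(if i \<in> S then (f(j0 := c)) (\<psi> i) else False) =
     ((\<lambda>i. if i \<in> ?R then f (\<psi> i) else False)(i1 := c, i2 := c)) i"
      using assms(4,5,8) psiR by (cases "i \<in> ?R") auto
  qed
  show ?thesis
    unfolding eq
    unfolding iid_bool_def PR2[symmetric]
    by (simp add: map_bind_pmf upd map_pmf_comp o_def)
       (simp add: map_pmf_def bind_assoc_pmf bind_return_pmf)
qed

lemma prob_eq_int: "measure_pmf.prob M {x. Q x} = (\<integral>x. of_bool (Q x) \<partial>M)"
proof -
  have "(\<integral>x. of_bool (Q x) \<partial>M) = (\<integral>x. indicator {x. Q x} x \<partial>M)"
    by (rule Bochner_Integration.integral_cong) (auto simp: indicator_def)
  also have "\<dots> = measure_pmf.prob M {x. Q x}" by simp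
  finally show ?thesis ..
qed

lemma int_ob[simp]: "integrable (measure_pmf M) (\<lambda>x. of_bool (Q x) :: real)"
  by (rule measure_pmf.integrable_const_bound[where B=1]) auto

theorem lemma6:
  fixes S :: "'a set" and T :: "'b set" and L :: "('a \<Rightarrow> bool) \<Rightarrow> bool"
    and \<psi> :: "'a \<Rightarrow> 'b" and p :: real and i1 i2 :: 'a and j0 :: 'b
  assumes "finite S" and "finite T"
    and "monotone_bf S L"
    and "\<psi> ` S \<subseteq> T"
    and "\<And>A. minimal_one_set S L A \<Longrightarrow> card (\<psi> ` A) = card A"
    and "0 \<le> p" and "p \<le> 1"
    and "i1 \<in> S" and "i2 \<in> S" and "i1 \<noteq> i2" and "j0 \<in> T"
    and "{i \<in> S. \<psi> i = j0} = {i1, i2}"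
    and "\<And>j. j \<in> T \<Longrightarrow> j \<noteq> j0 \<Longrightarrow> card {i \<in> S. \<psi> i = j} = 1"
  shows "measure_pmf.prob (iid_bool S p) {X. L X}
         - measure_pmf.prob (iid_bool T p) {Y. L (\<lambda>i. if i \<in> S then Y (\<psi> i) else False)}
       = p * (1 - p) *
         (measure_pmf.prob (iid_bool S p) {X. Lpair L i1 i2 X = f_or}
          - measure_pmf.prob (iid_bool S p) {X. Lpair L i1 i2 X = f_and})"
proof -
  let ?R = "S - {i1,i2}"
  let ?P = "iid_bool ?R p"
  define l where "l x a b = L (x(i1 := a, i2 := b))" for x a b
  define pr where "pr Q = measure_pmf.prob ?P {x. Q x}" for Q
  have upd2: "x(i1 := a, i2 := b, i1 := z1, i2 := z2) = x(i1 := z1, i2 := z2)" for x :: "'a \<Rightarrow> bool" and a b z1 z2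
    using assms(10) by (intro ext) auto
  have LP: "Lpair L i1 i2 (x(i1 := a, i2 := b)) = Lpair L i1 i2 x" for x a b
    unfolding Lpair_def upd2 ..
  have gen: "measure_pmf.prob (iid_bool S p) {X. Q X} =
     p * (p * pr (\<lambda>x. Q (x(i1 := True, i2 := True))) + (1 - p) * pr (\<lambda>x. Q (x(i1 := True, i2 := False))))
     + (1 - p) * (p * pr (\<lambda>x. Q (x(i1 := False, i2 := True))) + (1 - p) * pr (\<lambda>x. Q (x(i1 := False, i2 := False))))" for Q
    apply (subst iid_S_decomp[OF assms(1,8,9,10)])
    using assms(6,7) by (simp add: prob_bind_pmf pr_def vimage_def algebra_simps)
  have A1: "measure_pmf.prob (iid_bool S p) {X. L X} =
     p * (p * pr (\<lambda>x. l x True True) + (1 - p) * pr (\<lambda>x. l x True False))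
     + (1 - p) * (p * pr (\<lambda>x. l x False True) + (1 - p) * pr (\<lambda>x. l x False False))"
    unfolding gen l_def ..
  have A2: "measure_pmf.prob (iid_bool S p) {X. Lpair L i1 i2 X = f} = pr (\<lambda>x. Lpair L i1 i2 x = f)" for f
    unfolding gen LP by (simp add: algebra_simps)
  have A3: "measure_pmf.prob (iid_bool T p) {Y. L (\<lambda>i. if i \<in> S then Y (\<psi> i) else False)}
     = p * pr (\<lambda>x. l x True True) + (1 - p) * pr (\<lambda>x. l x False False)"
  proof -
    have "measure_pmf.prob (iid_bool T p) {Y. L (\<lambda>i. if i \<in> S then Y (\<psi> i) else False)}
      = measure_pmf.prob (map_pmf (\<lambda>Y i. if i \<in> S then Y (\<psi> i) else False) (iid_bool T p)) {X. L X}"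
      by (simp add: vimage_def)
    also have eqT: "map_pmf (\<lambda>Y i. if i \<in> S then Y (\<psi> i) else False) (iid_bool T p) =
     bind_pmf (bernoulli_pmf p) (\<lambda>c. map_pmf (\<lambda>x. x(i1 := c, i2 := c)) ?P)"
      by (rule iid_T_decomp) (use assms in auto)
    also have "measure_pmf.prob \<dots> {X. L X} = p * pr (\<lambda>x. l x True True) + (1 - p) * pr (\<lambda>x. l x False False)"
      apply (subst prob_bind_pmf)
      using assms(6,7) apply (simp add: pr_def vimage_def l_def algebra_simps)
      done
    finally show ?thesis .
  qed
  show ?thesis
  proof -
    define ob where "ob b = (of_bool b :: real)" for b
    define D where "D x = p * (p * ob (l x True True) + (1 - p) * ob (l x True False))
     + (1 - p) * (p * ob (l x False True) + (1 - p) * ob (l x False False))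
     - (p * ob (l x True True) + (1 - p) * ob (l x False False))
     - p * (1 - p) * (ob (Lpair L i1 i2 x = f_or) - ob (Lpair L i1 i2 x = f_and))" for x
    have pt: "D x = 0" if x: "x \<in> set_pmf ?P" for x
    proof -
      have fR: "finite ?R" using assms(1) by auto
      have out: "\<not> x i" if "i \<notin> ?R" for i
        using x set_Pi_pmf_subset[OF fR, of False "\<lambda>_. bernoulli_pmf p"] that
        unfolding iid_bool_def by auto
      have bc: "x(i1 := a, i2 := b) \<in> bconf S" for a b
        using out assms(8,9) unfolding bconf_def by auto
      have mono: "l x c d" if "l x a b" "a \<longrightarrow> c" "b \<longrightarrow> d" for a b c d
      proof -
        have "\<forall>i\<in>S. (x(i1 := a, i2 := b)) i \<longrightarrow> (x(i1 := c, i2 := d)) i"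
          using that(2,3) by auto
        thus ?thesis using assms(3) bc[of a b] bc[of c d] that(1) unfolding monotone_bf_def l_def
          by blast
      qed
      have por: "(Lpair L i1 i2 x = f_or) = (l x True True \<and> l x True False \<and> l x False True \<and> \<not> l x False False)"
        unfolding Lpair_def f_or_def fun_eq_iff all_bool_eq l_def by auto
      have pand: "(Lpair L i1 i2 x = f_and) = (l x True True \<and> \<not> l x True False \<and> \<not> l x False True \<and> \<not> l x False False)"
        unfolding Lpair_def f_and_def fun_eq_iff all_bool_eq l_def by auto
      show ?thesis
        unfolding D_def por pand ob_def
        using mono[of True False True True] mono[of False True True True]
          mono[of False False True False] mono[of False False False True]
        by (cases "l x True True"; cases "l x True False"; cases "l x False True"; cases "l x False False")
           (simp_all add: algebra_simps)
    qed
    have "(\<integral>x. D x \<partial>?P) = 0"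
      using integral_cong_AE[of "\<lambda>x. D x" ?P "\<lambda>_. 0"] pt by (simp add: AE_pmfI)
    moreover have "(\<integral>x. D x \<partial>?P) = p * (p * pr (\<lambda>x. l x True True) + (1 - p) * pr (\<lambda>x. l x True False))
     + (1 - p) * (p * pr (\<lambda>x. l x False True) + (1 - p) * pr (\<lambda>x. l x False False))
     - (p * pr (\<lambda>x. l x True True) + (1 - p) * pr (\<lambda>x. l x False False))
     - p * (1 - p) * (pr (\<lambda>x. Lpair L i1 i2 x = f_or) - pr (\<lambda>x. Lpair L i1 i2 x = f_and))"
      unfolding D_def pr_def prob_eq_int ob_def
      by (simp add: integral_diff integral_add)
    ultimately have E: "p * (p * pr (\<lambda>x. l x True True) + (1 - p) * pr (\<lambda>x. l x True False))
     + (1 - p) * (p * pr (\<lambda>x. l x False True) + (1 - p) * pr (\<lambda>x. l x False False))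
     - (p * pr (\<lambda>x. l x True True) + (1 - p) * pr (\<lambda>x. l x False False))
     - p * (1 - p) * (pr (\<lambda>x. Lpair L i1 i2 x = f_or) - pr (\<lambda>x. Lpair L i1 i2 x = f_and)) = 0"
      by linarith
    show ?thesis unfolding A1 A2[of f_or] A2[of f_and] A3 using E by algebra
  qed
qed

end
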